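(* Let $X$ be a continuous vector field on $\mathbb{S}^1$ of finite width $w(X)$, with support function $\phi_X$. Assume that $\mathbb{D}^2\times\{0\}$ is a support plane of $\mathrm{gr}(\phi_X^-)$ at $(0,0,\phi_X^-(0,0))$, i.e. $\phi_X^-(\eta)\ge0$ for all $\eta\in\mathbb{D}^2$ and $\phi_X^-(0,0)=0$. Then $\phi_X(z)\le2w(X)$ for all $z\in\mathbb{S}^1$.
   Context: $\mathbb{D}^2$ is the open unit disk in $\mathbb{R}^2$, $\mathbb{S}^1$ its boundary. A vector field $X$ on $\mathbb{S}^1$ is written $X(z)=iz\phi_X(z)$ with $\phi_X:\mathbb{S}^1\to\mathbb{R}$ its support function. For $\eta\in\overline{\mathbb{D}^2}$, $\phi_X^-(\eta)=\sup\{a(\eta):a:\mathbb{R}^2\to\mathbb{R}\text{ affine},a|_{\mathbb{S}^1}\le\phi_X\}$, $\phi_X^+(\eta)=\inf\{a(\eta):a\text{ affine},a|_{\mathbb{S}^1}\ge\phi_X\}$. The width is $w(X)=\sup_{\eta\in\mathbb{D}^2}\frac{\phi_X^+(\eta)-\phi_X^-(\eta)}{\sqrt{1-|\eta|^2}}$. *)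

theory Defs
  imports "HOL-Analysis.Analysis"
begin

text \<open>We identify \<open>\<real>\<^sup>2\<close> with \<open>\<complex>\<close>.\<close>

definition tangent_field :: "(complex \<Rightarrow> complex) \<Rightarrow> bool" where
  "tangent_field X \<longleftrightarrow> (\<forall>z\<in>sphere 0 1. \<exists>t::real. X z = \<i> * z * of_real t)"

text \<open>Support function: \<open>\<phi>_X(z) = X(z)/(\<i> z)\<close> (real part, which is all of it for tangent fields).\<close>
definition support_fun :: "(complex \<Rightarrow> complex) \<Rightarrow> complex \<Rightarrow> real" where
  "support_fun X z = Re (X z / (\<i> * z))"

definition affine_fun :: "(complex \<Rightarrow> real) \<Rightarrow> bool" where
  "affine_fun a \<longleftrightarrow> (\<exists>c b1 b2. \<forall>x. a x = c + b1 * Re x + b2 * Im x)"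

definition phi_minus :: "(complex \<Rightarrow> complex) \<Rightarrow> complex \<Rightarrow> real" where
  "phi_minus X \<eta> = Sup {a \<eta> | a. affine_fun a \<and> (\<forall>z\<in>sphere 0 1. a z \<le> support_fun X z)}"

definition phi_plus :: "(complex \<Rightarrow> complex) \<Rightarrow> complex \<Rightarrow> real" where
  "phi_plus X \<eta> = Inf {a \<eta> | a. affine_fun a \<and> (\<forall>z\<in>sphere 0 1. a z \<ge> support_fun X z)}"

definition width :: "(complex \<Rightarrow> complex) \<Rightarrow> ereal" where
  "width X = (SUP \<eta>\<in>ball 0 1. ereal ((phi_plus X \<eta> - phi_minus X \<eta>) / sqrt (1 - (cmod \<eta>)\<^sup>2)))"

end

theory Submission
  imports Defs
begin

lemma aff_line:
  assumes "affine_fun a"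
  shows "\<exists>c L. \<forall>s::real. a (complex_of_real s * z) = c + s * L"
proof -
  obtain c b1 b2 where h: "\<forall>x. a x = c + b1 * Re x + b2 * Im x"
    using assms unfolding affine_fun_def by blast
  show ?thesis
    by (rule exI[of _ c], rule exI[of _ "b1 * Re z + b2 * Im z"]) (simp add: h algebra_simps)
qed

lemma lin_cl:
  fixes c L :: real
  assumes "\<forall>s. 0 \<le> s \<and> s < 1 \<longrightarrow> 0 \<le> c - s * L"
  shows "0 \<le> c - L"
proof (rule ccontr)
  assume n: "\<not> 0 \<le> c - L"
  have c0: "0 \<le> c" using assms[rule_format, of 0] by simp
  hence Lp: "L > 0" using n by linarith
  define s where "s = (c / L + 1) / 2"
  have "c / L < 1" using n Lp by (simp add: divide_simps)
  moreover have "0 \<le> c / L" using c0 Lp by simp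
  ultimately have "0 \<le> s \<and> s < 1" unfolding s_def by (simp add: field_simps)
  hence "0 \<le> c - s * L" using assms by blast
  moreover have "s * L = (c + L) / 2" unfolding s_def using Lp by (simp add: field_simps)
  ultimately have "0 \<le> c - (c + L) / 2" by simp
  thus False using n by simp
qed

theorem lemma6p4:
  fixes X :: "complex \<Rightarrow> complex"
  assumes "continuous_on (sphere 0 1) X"
    and "tangent_field X"
    and "width X < \<infinity>"
    and "\<forall>\<eta>\<in>ball 0 1. phi_minus X \<eta> \<ge> 0"
    and "phi_minus X 0 = 0"
  shows "\<forall>z\<in>sphere 0 1. ereal (support_fun X z) \<le> 2 * width X"
proof
  fix z0 :: complex assume z0: "z0 \<in> sphere 0 1"
  let ?S = "sphere (0::complex) 1"
  let ?p = "support_fun X"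
  have cont: "continuous_on ?S ?p"
    unfolding support_fun_def
    by (intro continuous_intros assms(1)) auto
  have "bounded (?p ` ?S)"
    by (intro compact_imp_bounded compact_continuous_image cont) simp
  then obtain M where M: "\<forall>z\<in>?S. \<bar>?p z\<bar> \<le> M"
    unfolding bounded_iff by auto
  have affc: "affine_fun (\<lambda>_. k)" for k
    unfolding affine_fun_def by (rule exI[of _ k], rule exI[of _ 0], rule exI[of _ 0]) simp
  have mz0: "-z0 \<in> ?S" using z0 by simp
  have key1: "0 \<le> a (-z0)" if aa: "affine_fun a" and au: "\<forall>z\<in>?S. a z \<ge> ?p z" for a
  proof -
    obtain c L where cL: "\<forall>s::real. a (complex_of_real s * z0) = c + s * L"
      using aff_line[OF aa] by blast
    have "0 \<le> c - s * L" if s: "0 \<le> s" "s < 1" for s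
    proof -
      let ?e = "complex_of_real (-s) * z0"
      have eb: "?e \<in> ball 0 1" using z0 s by (simp add: norm_mult)
      have ne: "{b ?e | b. affine_fun b \<and> (\<forall>z\<in>?S. b z \<le> ?p z)} \<noteq> {}"
        using affc[of "-M"] M by fastforce
      have "phi_minus X ?e \<le> a ?e"
        unfolding phi_minus_def
      proof (rule cSup_least[OF ne])
        fix x assume "x \<in> {b ?e | b. affine_fun b \<and> (\<forall>z\<in>?S. b z \<le> ?p z)}"
        then obtain b where b: "x = b ?e" "affine_fun b" "\<forall>z\<in>?S. b z \<le> ?p z" by blast
        obtain cb Lb where cLb: "\<forall>s::real. b (complex_of_real s * z0) = cb + s * Lb"
          using aff_line[OF b(2)] by blast
        have "b z0 \<le> a z0" using b(3)[rule_format, OF z0] au[rule_format, OF z0] by linarith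
        hence 1: "cb + Lb \<le> c + L" using cLb[rule_format, of 1] cL[rule_format, of 1] by simp
        have "b (-z0) \<le> a (-z0)" using b(3)[rule_format, OF mz0] au[rule_format, OF mz0] by linarith
        hence 2: "cb - Lb \<le> c - L" using cLb[rule_format, of "-1"] cL[rule_format, of "-1"] by simp
        have "(c - s*L) - (cb - s*Lb) = (1+s)/2 * ((c - L) - (cb - Lb)) + (1-s)/2 * ((c+L) - (cb+Lb))"
          by (simp add: field_simps)
        also have "\<dots> \<ge> 0" using 1 2 s by (intro add_nonneg_nonneg mult_nonneg_nonneg) auto
        finally show "x \<le> a ?e" using b(1) cLb[rule_format, of "-s"] cL[rule_format, of "-s"] by (simp del: of_real_minus)
      qed
      moreover have "phi_minus X ?e \<ge> 0" using assms(4) eb by blast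
      ultimately show ?thesis using cL[rule_format, of "-s"] by (simp del: of_real_minus)
    qed
    hence "0 \<le> c - L" by (intro lin_cl) auto
    thus ?thesis using cL[rule_format, of "-1"] by simp
  qed
  have key2: "?p z0 / 2 \<le> phi_plus X 0"
  proof -
    have ne: "{a 0 | a. affine_fun a \<and> (\<forall>z\<in>?S. a z \<ge> ?p z)} \<noteq> {}"
      using affc[of "M"] M by fastforce
    show ?thesis unfolding phi_plus_def
    proof (rule cInf_greatest[OF ne])
      fix x assume "x \<in> {a 0 | a. affine_fun a \<and> (\<forall>z\<in>?S. a z \<ge> ?p z)}"
      then obtain a where a: "x = a 0" "affine_fun a" "\<forall>z\<in>?S. a z \<ge> ?p z" by blast
      obtain c L where cL: "\<forall>s::real. a (complex_of_real s * z0) = c + s * L"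
        using aff_line[OF a(2)] by blast
      have "a z0 \<ge> ?p z0" using a(3) z0 by blast
      hence 1: "c + L \<ge> ?p z0" using cL[rule_format, of 1] by simp
      have "a (-z0) \<ge> 0" using key1[OF a(2) a(3)] .
      hence 2: "c - L \<ge> 0" using cL[rule_format, of "-1"] by simp
      have "a 0 = c" using cL[rule_format, of 0] by simp
      thus "?p z0 / 2 \<le> x" using a(1) 1 2 by simp
    qed
  qed
  have "ereal ((phi_plus X 0 - phi_minus X 0) / sqrt (1 - (cmod 0)\<^sup>2)) \<le> width X"
    unfolding width_def by (rule SUP_upper) simp
  hence w: "ereal (phi_plus X 0) \<le> width X" using assms(5) by simp
  have "ereal (?p z0) = 2 * ereal (?p z0 / 2)" by simp
  also have "\<dots> \<le> 2 * ereal (phi_plus X 0)" using key2 by simp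
  also have "\<dots> \<le> 2 * width X" using w by (intro ereal_mult_left_mono) auto
  finally show "ereal (?p z0) \<le> 2 * width X" .
qed

end
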